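(* The following are equivalent: (1) There exist a strictly positive $f\in\mathrm{Dom}_+(\Gamma)$ and $\epsilon>0$ such that $\Gamma f(x)\le-\epsilon$ for all $x\in\mathbb X$. (2) The explosion time $\zeta$ satisfies $\mathbb E_x\zeta<+\infty$ for all $x\in\mathbb X$.
   Context: Let $\mathbb X$ be a countably infinite set and $\Gamma=(\Gamma_{xy})_{x,y\in\mathbb X}$ a matrix with $\Gamma_{xy}\ge0$ for $y\ne x$, $\gamma_x:=\sum_{y\ne x}\Gamma_{xy}$, $\Gamma_{xx}=-\gamma_x$, and $0<\gamma_x<\infty$ for all $x$. Let $P_{xy}=\Gamma_{xy}/\gamma_x$ for $y\neq x$ and $P_{xx}=0$; the discrete-time Markov chain $(\tilde\xi_n)_{n\ge0}$ with transition matrix $P$ (embedded jump chain) is assumed irreducible. The continuous-time Markov chain $(\xi_t)_{t\ge0}$ with generator $\Gamma$: conditionally on $\tilde\xi$, holding times $\sigma_n$ ($n\ge1$) are independent exponential with parameter $\gamma_{\tilde\xi_{n-1}}$; $J_0=0$, $J_n=\sigma_1+\dots+\sigma_n$; the explosion time is $\zeta=\lim_n J_n$; $\xi_t=\tilde\xi_n$ for $J_n\le t<J_{n+1}$, and $\xi_t=\partial$ (cemetery) for $t\ge\zeta$. $\mathbb E_x$ refers to $\xi_0=x$. $\mathrm{Dom}(\Gamma)=\{f:\mathbb X\to\mathbb R:\ \sum_{y\ne x}\Gamma_{xy}|f(y)|<\infty\ \forall x\}$, $\mathrm{Dom}_+(\Gamma)$ its non-negative elements, and $\Gamma f(x)=\sum_{y}\Gamma_{xy}f(y)$.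 *)

theory Defs
  imports "HOL-Probability.Probability"
begin

definition gam :: "('a \<Rightarrow> 'a \<Rightarrow> real) \<Rightarrow> 'a \<Rightarrow> real" where
  "gam \<Gamma> x = (\<Sum>\<^sub>\<infinity>y\<in>UNIV - {x}. \<Gamma> x y)"

definition rate_matrix :: "('a \<Rightarrow> 'a \<Rightarrow> real) \<Rightarrow> bool" where
  "rate_matrix \<Gamma> \<longleftrightarrow>
     (\<forall>x y. y \<noteq> x \<longrightarrow> 0 \<le> \<Gamma> x y) \<and>
     (\<forall>x. (\<Gamma> x) summable_on (UNIV - {x})) \<and>
     (\<forall>x. \<Gamma> x x = - gam \<Gamma> x) \<and>
     (\<forall>x. 0 < gam \<Gamma> x)"

definition jumpP :: "('a \<Rightarrow> 'a \<Rightarrow> real) \<Rightarrow> 'a \<Rightarrow> 'a \<Rightarrow> real" where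
  "jumpP \<Gamma> x y = (if y = x then 0 else \<Gamma> x y / gam \<Gamma> x)"

definition irreducible_jump :: "('a \<Rightarrow> 'a \<Rightarrow> real) \<Rightarrow> bool" where
  "irreducible_jump \<Gamma> \<longleftrightarrow>
     (\<forall>x y. \<exists>n xs. xs 0 = x \<and> xs n = y \<and> (\<forall>i<n. 0 < jumpP \<Gamma> (xs i) (xs (Suc i))))"

definition Dom :: "('a \<Rightarrow> 'a \<Rightarrow> real) \<Rightarrow> ('a \<Rightarrow> real) set" where
  "Dom \<Gamma> = {f. \<forall>x. (\<lambda>y. \<Gamma> x y * \<bar>f y\<bar>) summable_on (UNIV - {x})}"

definition Dom_plus :: "('a \<Rightarrow> 'a \<Rightarrow> real) \<Rightarrow> ('a \<Rightarrow> real) set" where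
  "Dom_plus \<Gamma> = {f \<in> Dom \<Gamma>. \<forall>x. 0 \<le> f x}"

definition gen_apply :: "('a \<Rightarrow> 'a \<Rightarrow> real) \<Rightarrow> ('a \<Rightarrow> real) \<Rightarrow> 'a \<Rightarrow> real" where
  "gen_apply \<Gamma> f x = (\<Sum>\<^sub>\<infinity>y. \<Gamma> x y * f y)"

text \<open>A realisation of the chain started at x on a probability space M:
  Xi n = embedded jump chain (Markov with transition jumpP, Xi 0 = x),
  Ee n = i.i.d. Exp(1) variables independent of the jump chain; the n+1-st holding time is
  sigma (n+1) = Ee n / gam (Xi n), which, conditionally on the jump chain, gives independent
  exponential holding times with parameters gam (Xi n).\<close>
definition ctmc_model ::
  "('a \<Rightarrow> 'a \<Rightarrow> real) \<Rightarrow> 'a \<Rightarrow> 'w measure \<Rightarrow> (nat \<Rightarrow> 'w \<Rightarrow> 'a) \<Rightarrow> (nat \<Rightarrow> 'w \<Rightarrow> real) \<Rightarrow> bool" where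
  "ctmc_model \<Gamma> x M Xi Ee \<longleftrightarrow>
     prob_space M \<and>
     (\<forall>n. Xi n \<in> measurable M (count_space UNIV)) \<and>
     (\<forall>n (xs :: nat \<Rightarrow> 'a).
        measure M {\<omega> \<in> space M. \<forall>i\<le>n. Xi i \<omega> = xs i}
          = (if xs 0 = x then 1 else 0) * (\<Prod>i<n. jumpP \<Gamma> (xs i) (xs (Suc i)))) \<and>
     (\<forall>n. distributed M lborel (Ee n) (\<lambda>t. ennreal (exponential_density 1 t))) \<and>
     prob_space.indep_vars M (\<lambda>_. borel) Ee UNIV \<and>
     prob_space.indep_set M
        {(\<lambda>\<omega> n. Xi n \<omega>) -` S \<inter> space M | S. S \<in> sets (Pi\<^sub>M UNIV (\<lambda>_. count_space UNIV))}
        {(\<lambda>\<omega> n. Ee n \<omega>) -` S \<inter> space M | S. S \<in> sets (Pi\<^sub>M UNIV (\<lambda>_. borel))}"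

definition explosion_time ::
  "('a \<Rightarrow> 'a \<Rightarrow> real) \<Rightarrow> (nat \<Rightarrow> 'w \<Rightarrow> 'a) \<Rightarrow> (nat \<Rightarrow> 'w \<Rightarrow> real) \<Rightarrow> 'w \<Rightarrow> ennreal" where
  "explosion_time \<Gamma> Xi Ee \<omega> = (\<Sum>n. ennreal (Ee n \<omega> / gam \<Gamma> (Xi n \<omega>)))"

end

theory Submission
  imports Defs
begin


lemma nn_integral_summable_on_real:
  fixes f :: "'b \<Rightarrow> real"
  assumes "f summable_on A" "\<And>x. x \<in> A \<Longrightarrow> 0 \<le> f x"
  shows "(\<integral>\<^sup>+x. ennreal (f x) \<partial>count_space A) = ennreal (infsum f A)"
proof -
  have "(\<lambda>x. norm (f x)) summable_on A"
    using assms by (subst summable_on_cong[where g=f]) auto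
  then have "Infinite_Set_Sum.abs_summable_on f A" using abs_summable_equivalent by blast
  then show ?thesis using assms
    by (simp add: nn_integral_conv_infsetsum infsetsum_infsum)
qed

lemma summable_on_from_nn_integral:
  fixes f :: "'b \<Rightarrow> real"
  assumes "(\<integral>\<^sup>+x. ennreal (f x) \<partial>count_space A) \<noteq> \<infinity>" "\<And>x. x \<in> A \<Longrightarrow> 0 \<le> f x"
  shows "f summable_on A"
proof -
  have "integrable (count_space A) f"
  proof (rule integrableI_bounded)
    have "(\<integral>\<^sup>+x. ennreal (norm (f x)) \<partial>count_space A) = (\<integral>\<^sup>+x. ennreal (f x) \<partial>count_space A)"
      using assms(2) by (intro nn_integral_cong) auto
    then show "(\<integral>\<^sup>+x. ennreal (norm (f x)) \<partial>count_space A) < \<infinity>" using assms(1) by (simp add: top.not_eq_extremum)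
  qed auto
  then have "Infinite_Set_Sum.abs_summable_on f A" by (simp add: abs_summable_on_def)
  then have "(\<lambda>x. norm (f x)) summable_on A" using abs_summable_equivalent by blast
  then show ?thesis using assms by (subst (asm) summable_on_cong[where g=f]) auto
qed




locale rm =
  fixes G :: "'a::countable \<Rightarrow> 'a \<Rightarrow> real"
  assumes RM: "rate_matrix G"
begin

lemma G_nonneg: "y \<noteq> x \<Longrightarrow> 0 \<le> G x y"
  using RM by (auto simp: rate_matrix_def)

lemma G_summ: "(G x) summable_on (UNIV - {x})"
  using RM by (auto simp: rate_matrix_def)

lemma G_diag: "G x x = - gam G x"
  using RM by (auto simp: rate_matrix_def)

lemma gam_pos: "0 < gam G x"
  using RM by (auto simp: rate_matrix_def)

lemma P_nonneg: "0 \<le> jumpP G x y"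
  using G_nonneg gam_pos[of x] by (auto simp: jumpP_def)

lemma P_rowsum: "(\<integral>\<^sup>+y. ennreal (jumpP G x y) \<partial>count_space UNIV) = 1"
proof -
  have "(\<integral>\<^sup>+y. ennreal (jumpP G x y) \<partial>count_space UNIV)
      = (\<integral>\<^sup>+y. ennreal (G x y / gam G x) \<partial>count_space (UNIV - {x}))"
    by (rule trans[OF nn_integral_count_space_eq[where B="UNIV - {x}"]]) (auto simp: jumpP_def intro!: nn_integral_cong)
  also have "\<dots> = ennreal (infsum (\<lambda>y. G x y / gam G x) (UNIV - {x}))"
    using G_summ[of x] G_nonneg[of _ x] gam_pos[of x]
    by (intro nn_integral_summable_on_real) (auto intro!: summable_on_cmult_left simp: divide_inverse)
  also have "infsum (\<lambda>y. G x y / gam G x) (UNIV - {x}) = 1"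
    using gam_pos[of x] by (simp add: divide_inverse infsum_cmult_left' gam_def[symmetric])
  finally show ?thesis by simp
qed

definition Pop :: "('a \<Rightarrow> ennreal) \<Rightarrow> 'a \<Rightarrow> ennreal" where
  "Pop \<phi> x = (\<integral>\<^sup>+y. ennreal (jumpP G x y) * \<phi> y \<partial>count_space UNIV)"

definition hf :: "'a \<Rightarrow> ennreal" where "hf x = ennreal (1 / gam G x)"

definition gf :: "'a \<Rightarrow> ennreal" where "gf x = (\<Sum>n. (Pop ^^ n) hf x)"

lemma Pop_mono: "(\<And>y. \<phi> y \<le> \<psi> y) \<Longrightarrow> Pop \<phi> x \<le> Pop \<psi> x"
  unfolding Pop_def by (intro nn_integral_mono mult_left_mono) auto

lemma Pop_suminf: "Pop (\<lambda>y. \<Sum>n. F n y) x = (\<Sum>n. Pop (F n) x)"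
  unfolding Pop_def ennreal_suminf_cmult[symmetric] by (rule nn_integral_suminf) simp

lemma Pop_add: "Pop (\<lambda>y. \<phi> y + \<psi> y) x = Pop \<phi> x + Pop \<psi> x"
  unfolding Pop_def by (simp add: distrib_left nn_integral_add)

lemma Pop_cmult: "Pop (\<lambda>y. c * \<phi> y) x = c * Pop \<phi> x"
  unfolding Pop_def by (subst nn_integral_cmult[symmetric]) (auto simp: ac_simps)

lemma gf_eq: "gf x = hf x + Pop gf x"
proof -
  have "gf x = (\<Sum>j. (Pop ^^ (j + 1)) hf x) + (Pop ^^ 0) hf x"
    using suminf_offset[of "\<lambda>n. (Pop ^^ n) hf x" 1] unfolding gf_def by (simp add: summableI)
  also have "(\<Sum>j. (Pop ^^ (j + 1)) hf x) = (\<Sum>j. Pop ((Pop ^^ j) hf) x)" by simp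
  also have "\<dots> = Pop gf x" unfolding gf_def by (rule Pop_suminf[symmetric])
  finally show ?thesis by (simp add: add.commute)
qed

lemma gf_bound:
  fixes f :: "'a \<Rightarrow> ennreal" and e :: real
  assumes e: "0 < e" and f: "\<And>x. ennreal e * hf x + Pop f x \<le> f x"
  shows "ennreal e * gf x \<le> f x"
proof -
  have S: "ennreal e * (\<Sum>n<N. (Pop ^^ n) hf x) + (Pop ^^ N) f x \<le> f x" for N x
  proof (induction N arbitrary: x)
    case 0 then show ?case by simp
  next
    case (Suc N)
    have "(\<Sum>n<Suc N. (Pop ^^ n) hf x) = hf x + Pop (\<lambda>y. \<Sum>n<N. (Pop ^^ n) hf y) x"
      unfolding Pop_def lessThan_Suc_eq_insert_0 
      by (simp add: sum.reindex nn_integral_sum sum_distrib_left)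
    moreover have "(Pop ^^ Suc N) f x = Pop ((Pop ^^ N) f) x"
      by simp
    ultimately have "ennreal e * (\<Sum>n<Suc N. (Pop ^^ n) hf x) + (Pop ^^ Suc N) f x
       = ennreal e * hf x + Pop (\<lambda>y. ennreal e * (\<Sum>n<N. (Pop ^^ n) hf y) + (Pop ^^ N) f y) x"
      by (simp add: Pop_add Pop_cmult distrib_left add.assoc)
    also have "\<dots> \<le> ennreal e * hf x + Pop f x"
      by (intro add_left_mono Pop_mono Suc.IH)
    also have "\<dots> \<le> f x" by (rule f)
    finally show ?case .
  qed
  have "ennreal e * gf x = (\<Sum>n. ennreal e * (Pop ^^ n) hf x)"
    unfolding gf_def by simp
  also have "\<dots> \<le> f x"
  proof (intro suminf_le_const summableI)
    fix N
    have "(\<Sum>n<N. ennreal e * (Pop ^^ n) hf x) \<le> ennreal e * (\<Sum>n<N. (Pop ^^ n) hf x) + (Pop ^^ N) f x"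
      by (simp add: sum_distrib_left)
    also have "\<dots> \<le> f x" by (rule S)
    finally show "(\<Sum>n<N. ennreal e * (Pop ^^ n) hf x) \<le> f x" .
  qed
  finally show ?thesis .
qed

end


context rm begin

lemma gen_apply_split:
  assumes "(\<lambda>y. G x y * f y) summable_on (UNIV - {x})"
  shows "gen_apply G f x = - gam G x * f x + infsum (\<lambda>y. G x y * f y) (UNIV - {x})"
proof -
  have "UNIV = insert x (UNIV - {x})" by auto
  then have "gen_apply G f x = infsum (\<lambda>y. G x y * f y) (insert x (UNIV - {x}))"
    unfolding gen_apply_def by simp
  also have "\<dots> = G x x * f x + infsum (\<lambda>y. G x y * f y) (UNIV - {x})"
    by (rule infsum_insert[OF assms]) auto
  finally show ?thesis by (simp add: G_diag)
qed

lemma Pop_real: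
  assumes "(\<lambda>y. G x y * f y) summable_on (UNIV - {x})" "\<And>y. 0 \<le> f y"
  shows "Pop (\<lambda>y. ennreal (f y)) x = ennreal (infsum (\<lambda>y. G x y * f y) (UNIV - {x}) / gam G x)"
proof -
  have "Pop (\<lambda>y. ennreal (f y)) x = (\<integral>\<^sup>+y. ennreal (G x y * f y / gam G x) \<partial>count_space (UNIV - {x}))"
    unfolding Pop_def
    by (rule trans[OF nn_integral_count_space_eq[where B="UNIV - {x}"]])
       (use G_nonneg[of _ x] gam_pos[of x] assms(2) in \<open>auto simp: jumpP_def ennreal_mult[symmetric] intro!: nn_integral_cong\<close>)
  also have "\<dots> = ennreal (infsum (\<lambda>y. G x y * f y / gam G x) (UNIV - {x}))"
    using assms G_nonneg[of _ x] gam_pos[of x]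
    by (intro nn_integral_summable_on_real) (auto intro!: summable_on_cmult_left simp: divide_inverse)
  also have "infsum (\<lambda>y. G x y * f y / gam G x) (UNIV - {x}) = infsum (\<lambda>y. G x y * f y) (UNIV - {x}) / gam G x"
    by (simp add: divide_inverse infsum_cmult_left')
  finally show ?thesis .
qed

lemma cond1_imp:
  assumes f: "f \<in> Dom_plus G" and pos: "\<forall>x. 0 < f x" and e: "0 < e"
    and ga: "\<forall>x. gen_apply G f x \<le> - e"
  shows "gf x < \<infinity>"
proof -
  have ineq: "ennreal e * hf x + Pop (\<lambda>y. ennreal (f y)) x \<le> ennreal (f x)" for x
  proof -
    have nn: "\<And>y. 0 \<le> f y" using pos by (simp add: less_imp_le)
    have sm: "(\<lambda>y. G x y * f y) summable_on (UNIV - {x})"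
      using f nn by (simp add: Dom_plus_def Dom_def)
    define S where "S = infsum (\<lambda>y. G x y * f y) (UNIV - {x})"
    have S0: "0 \<le> S" unfolding S_def using G_nonneg nn by (intro infsum_nonneg) auto
    have "- gam G x * f x + S \<le> - e" using ga[rule_format, of x] gen_apply_split[OF sm] unfolding S_def by simp
    then have le: "e / gam G x + S / gam G x \<le> f x"
      using gam_pos[of x] by (simp add: field_simps)
    have m: "ennreal e * hf x = ennreal (e / gam G x)" unfolding hf_def using e gam_pos[of x]
      by (subst ennreal_mult[symmetric]) auto
    have "ennreal e * hf x + Pop (\<lambda>y. ennreal (f y)) x = ennreal (e / gam G x) + ennreal (S / gam G x)"
      unfolding m Pop_real[OF sm nn] S_def by simp
    also have "\<dots> = ennreal (e / gam G x + S / gam G x)"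
      using e gam_pos[of x] S0 by (subst ennreal_plus) auto
    also have "\<dots> \<le> ennreal (f x)" using le by (rule ennreal_leI)
    finally show ?thesis .
  qed
  have "ennreal e * gf x \<le> ennreal (f x)"
    by (rule gf_bound[OF e ineq])
  show ?thesis
  proof (rule ccontr)
    assume "\<not> gf x < \<infinity>"
    then have "gf x = \<infinity>" by (simp add: less_top[symmetric])
    then have "ennreal e * gf x = \<infinity>" using e by (simp add: ennreal_mult_top)
    with \<open>ennreal e * gf x \<le> ennreal (f x)\<close> show False by (simp add: top_unique)
  qed
qed

lemma cond2_imp:
  assumes fin: "\<And>x. gf x < \<infinity>"
  shows "\<exists>f \<in> Dom_plus G. \<exists>\<epsilon>::real. (\<forall>x. 0 < f x) \<and> 0 < \<epsilon> \<and> (\<forall>x. gen_apply G f x \<le> - \<epsilon>)"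
proof -
  define f where "f x = enn2real (gf x)" for x
  have gf_f: "gf x = ennreal (f x)" for x using fin[of x] unfolding f_def by (simp add: less_top)
  have nn: "0 \<le> f x" for x unfolding f_def by simp
  have gfeq: "gf = (\<lambda>y. ennreal (f y))" using gf_f by (intro ext) auto
  have key: "(\<lambda>y. G x y * f y) summable_on (UNIV - {x}) \<and> gen_apply G f x = -1" for x
  proof -
    have eq1: "(\<integral>\<^sup>+y. ennreal (G x y * f y) \<partial>count_space (UNIV - {x})) = ennreal (gam G x) * Pop gf x"
      unfolding Pop_def gf_f
      apply (subst nn_integral_cmult[symmetric], simp)
      apply (rule trans[OF _ nn_integral_count_space_eq[where A="UNIV - {x}"]])
      using gam_pos[of x] G_nonneg[of _ x] nn
      by (auto simp: jumpP_def ennreal_mult'[symmetric] intro!: nn_integral_cong)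
    have "Pop gf x \<le> hf x + Pop gf x" by simp
    then have "Pop gf x < \<infinity>" using fin[of x] gf_eq[of x] by simp
    then have sm: "(\<lambda>y. G x y * f y) summable_on (UNIV - {x})"
      using G_nonneg[of _ x] nn eq1
      by (intro summable_on_from_nn_integral) (auto simp: ennreal_mult_eq_top_iff)
    define S where "S = infsum (\<lambda>y. G x y * f y) (UNIV - {x})"
    have S0: "0 \<le> S" unfolding S_def using G_nonneg nn by (intro infsum_nonneg) auto
    have "ennreal (f x) = ennreal (1 / gam G x) + ennreal (S / gam G x)"
      using gf_eq[of x] unfolding hf_def S_def gfeq Pop_real[OF sm nn] by simp
    also have "\<dots> = ennreal (1 / gam G x + S / gam G x)"
      using gam_pos[of x] S0 by (simp add: ennreal_plus)
    finally have "f x = 1 / gam G x + S / gam G x"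
      using gam_pos[of x] S0 nn by (subst (asm) ennreal_inj) auto
    then have "gen_apply G f x = -1"
      using gen_apply_split[OF sm] gam_pos[of x] unfolding S_def[symmetric] by (simp add: field_simps)
    with sm show ?thesis by simp
  qed
  have "f \<in> Dom_plus G"
    unfolding Dom_plus_def Dom_def using key nn by (simp add: abs_of_nonneg)
  moreover have "0 < f x" for x
  proof -
    have "hf x \<le> gf x" using gf_eq[of x] by simp
    then have "ennreal (1 / gam G x) \<le> ennreal (f x)" unfolding hf_def gf_f .
    then have "1 / gam G x \<le> f x" using nn by (subst (asm) ennreal_le_iff) auto
    moreover have "0 < 1 / gam G x" using gam_pos[of x] by simp
    ultimately show ?thesis by linarith
  qed
  ultimately show ?thesis using key by (intro bexI[of _ f] exI[of _ 1]) auto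
qed

end



locale cm = rm G for G :: "'a::countable \<Rightarrow> 'a \<Rightarrow> real" +
  fixes x :: 'a and M :: "'w measure" and Xi :: "nat \<Rightarrow> 'w \<Rightarrow> 'a" and Ee :: "nat \<Rightarrow> 'w \<Rightarrow> real"
  assumes model: "ctmc_model G x M Xi Ee"
begin

sublocale prob_space M using model by (simp add: ctmc_model_def)

lemma Xm[measurable]: "Xi n \<in> measurable M (count_space UNIV)"
  using model by (simp add: ctmc_model_def)

lemma path: "measure M {\<omega> \<in> space M. \<forall>i\<le>n. Xi i \<omega> = xs i}
          = (if xs 0 = x then 1 else 0) * (\<Prod>i<n. jumpP G (xs i) (xs (Suc i)))"
  using model by (simp add: ctmc_model_def)

lemma Ed: "distributed M lborel (Ee n) (\<lambda>t. ennreal (exponential_density 1 t))"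
  using model by (simp add: ctmc_model_def)

lemma Em[measurable]: "Ee n \<in> borel_measurable M"
  using distributed_measurable[OF Ed[of n]] by simp

definition A :: "nat \<Rightarrow> 'a \<Rightarrow> 'w set" where "A n y = {\<omega>\<in>space M. Xi n \<omega> = y}"

lemma A_sets[measurable]: "A n y \<in> sets M"
  unfolding A_def by measurable

definition C :: "nat \<Rightarrow> (nat \<Rightarrow> 'a) \<Rightarrow> 'w set" where "C n xs = {\<omega>\<in>space M. \<forall>i\<le>n. Xi i \<omega> = xs i}"

lemma C_sets[measurable]: "C n xs \<in> sets M"
  unfolding C_def by measurable

lemma emeasure_C: "emeasure M (C n xs) = ennreal ((if xs 0 = x then 1 else 0) * (\<Prod>i<n. jumpP G (xs i) (xs (Suc i))))"
  using path[of n xs] by (simp add: emeasure_eq_measure C_def)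

lemma int_disc: "(\<integral>\<^sup>+\<omega>. \<phi> (Xi n \<omega>) \<partial>M) = (\<integral>\<^sup>+y. \<phi> y * emeasure M (A n y) \<partial>count_space UNIV)"
proof -
  have "(\<integral>\<^sup>+\<omega>. \<phi> (Xi n \<omega>) \<partial>M) = (\<integral>\<^sup>+\<omega>. \<integral>\<^sup>+y. \<phi> y * indicator (A n y) \<omega> \<partial>count_space UNIV \<partial>M)"
  proof (intro nn_integral_cong)
    fix \<omega> assume "\<omega> \<in> space M"
    then have "\<And>y. indicator (A n y) \<omega> = (indicator {Xi n \<omega>} y :: ennreal)"
      by (auto simp: A_def split: split_indicator)
    then show "\<phi> (Xi n \<omega>) = (\<integral>\<^sup>+y. \<phi> y * indicator (A n y) \<omega> \<partial>count_space UNIV)"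
      by simp
  qed
  also have "\<dots> = (\<integral>\<^sup>+y. \<integral>\<^sup>+\<omega>. \<phi> y * indicator (A n y) \<omega> \<partial>M \<partial>count_space UNIV)"
    by (rule nn_integral_count_space_nn_integral) auto
  also have "\<dots> = (\<integral>\<^sup>+y. \<phi> y * emeasure M (A n y) \<partial>count_space UNIV)"
    by (intro nn_integral_cong nn_integral_cmult_indicator) auto
  finally show ?thesis .
qed

lemma A0: "emeasure M (A 0 y) = (if y = x then 1 else 0)"
proof -
  have "A 0 y = C 0 (\<lambda>_. y)" by (auto simp: A_def C_def)
  then show ?thesis by (simp add: emeasure_C)
qed

lemma C_disj:
  assumes "xs \<in> {..n} \<rightarrow>\<^sub>E UNIV" "xs' \<in> {..n} \<rightarrow>\<^sub>E UNIV" "xs \<noteq> xs'" "m \<ge> n"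
    "\<And>i. i \<le> n \<Longrightarrow> ys i = xs i" "\<And>i. i \<le> n \<Longrightarrow> ys' i = xs' i"
  shows "C m ys \<inter> C m ys' = {}"
proof -
  obtain i where "i \<le> n" "xs i \<noteq> xs' i"
    using assms(1-3) by (metis PiE_ext atMost_iff)
  then show ?thesis using assms(4-6) by (auto simp: C_def)
qed

lemma Amarkov: "emeasure M (A n y \<inter> A (Suc n) z) = emeasure M (A n y) * ennreal (jumpP G y z)"
proof -
  define Q where "Q = {xs \<in> {..n} \<rightarrow>\<^sub>E (UNIV::'a set). xs n = y}"
  have cQ: "countable Q" unfolding Q_def
    by (rule countable_subset[OF _ countable_PiE[of "{..n}" "\<lambda>_. UNIV"]]) auto
  have U1: "A n y = (\<Union>xs\<in>Q. C n xs)"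
  proof (intro equalityI subsetI)
    fix \<omega> assume w: "\<omega> \<in> A n y"
    then have "restrict (\<lambda>i. Xi i \<omega>) {..n} \<in> Q" "\<omega> \<in> C n (restrict (\<lambda>i. Xi i \<omega>) {..n})"
      by (auto simp: A_def C_def Q_def)
    then show "\<omega> \<in> (\<Union>xs\<in>Q. C n xs)" by blast
  qed (auto simp: A_def C_def Q_def)
  have U2: "A n y \<inter> A (Suc n) z = (\<Union>xs\<in>Q. C (Suc n) (xs(Suc n := z)))"
  proof (intro equalityI subsetI)
    fix \<omega> assume w: "\<omega> \<in> A n y \<inter> A (Suc n) z"
    then have "restrict (\<lambda>i. Xi i \<omega>) {..n} \<in> Q" "\<omega> \<in> C (Suc n) ((restrict (\<lambda>i. Xi i \<omega>) {..n})(Suc n := z))"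
      by (auto simp: A_def C_def Q_def le_Suc_eq)
    then show "\<omega> \<in> (\<Union>xs\<in>Q. C (Suc n) (xs(Suc n := z)))" by blast
  next
    fix \<omega> assume "\<omega> \<in> (\<Union>xs\<in>Q. C (Suc n) (xs(Suc n := z)))"
    then obtain xs where "xs \<in> Q" "\<omega> \<in> C (Suc n) (xs(Suc n := z))" by blast
    then show "\<omega> \<in> A n y \<inter> A (Suc n) z"
      unfolding A_def C_def Q_def by (auto dest: spec[of _ n] spec[of _ "Suc n"])
  qed
  have d1: "disjoint_family_on (C n) Q"
  unfolding disjoint_family_on_def
  proof (intro ballI impI)
    fix a b assume "a \<in> Q" "b \<in> Q" "a \<noteq> b"
    then show "C n a \<inter> C n b = {}" by (intro C_disj[where n=n]) (auto simp: Q_def)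
  qed
  have d2: "disjoint_family_on (\<lambda>xs. C (Suc n) (xs(Suc n := z))) Q"
  unfolding disjoint_family_on_def
  proof (intro ballI impI)
    fix a b assume "a \<in> Q" "b \<in> Q" "a \<noteq> b"
    then show "C (Suc n) (a(Suc n := z)) \<inter> C (Suc n) (b(Suc n := z)) = {}"
      by (intro C_disj[where n=n]) (auto simp: Q_def)
  qed
  have step: "emeasure M (C (Suc n) (xs(Suc n := z))) = emeasure M (C n xs) * ennreal (jumpP G y z)"
    if "xs \<in> Q" for xs
  proof -
    have "(\<Prod>i<Suc n. jumpP G ((xs(Suc n := z)) i) ((xs(Suc n := z)) (Suc i)))
        = (\<Prod>i<n. jumpP G (xs i) (xs (Suc i))) * jumpP G y z"
      using that by (simp add: Q_def)
    then show ?thesis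
      unfolding emeasure_C
      by (simp add: ennreal_mult'[symmetric] P_nonneg prod_nonneg mult.assoc)
  qed
  have "emeasure M (A n y \<inter> A (Suc n) z) = (\<integral>\<^sup>+xs. emeasure M (C (Suc n) (xs(Suc n := z))) \<partial>count_space Q)"
    unfolding U2 by (rule emeasure_UN_countable[OF _ cQ d2]) auto
  also have "\<dots> = (\<integral>\<^sup>+xs. emeasure M (C n xs) * ennreal (jumpP G y z) \<partial>count_space Q)"
    by (intro nn_integral_cong) (simp add: step)
  also have "\<dots> = (\<integral>\<^sup>+xs. emeasure M (C n xs) \<partial>count_space Q) * ennreal (jumpP G y z)"
    by (rule nn_integral_multc) simp
  also have "(\<integral>\<^sup>+xs. emeasure M (C n xs) \<partial>count_space Q) = emeasure M (A n y)"
    unfolding U1 by (rule emeasure_UN_countable[OF _ cQ d1, symmetric]) auto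
  finally show ?thesis .
qed

lemma Asum: "emeasure M (A (Suc n) z) = (\<integral>\<^sup>+y. emeasure M (A n y \<inter> A (Suc n) z) \<partial>count_space UNIV)"
proof -
  have "A (Suc n) z = (\<Union>y\<in>UNIV. A n y \<inter> A (Suc n) z)" by (auto simp: A_def)
  moreover have "disjoint_family_on (\<lambda>y. A n y \<inter> A (Suc n) z) UNIV"
    by (auto simp: disjoint_family_on_def A_def)
  moreover have "emeasure M (\<Union>y\<in>UNIV. A n y \<inter> A (Suc n) z) = (\<integral>\<^sup>+y. emeasure M (A n y \<inter> A (Suc n) z) \<partial>count_space UNIV)"
    if "disjoint_family_on (\<lambda>y. A n y \<inter> A (Suc n) z) UNIV"
    by (rule emeasure_UN_countable[OF _ _ that]) auto
  ultimately show ?thesis by simp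
qed

lemma step: "(\<integral>\<^sup>+\<omega>. \<phi> (Xi (Suc n) \<omega>) \<partial>M) = (\<integral>\<^sup>+\<omega>. Pop \<phi> (Xi n \<omega>) \<partial>M)"
proof -
  have "(\<integral>\<^sup>+\<omega>. \<phi> (Xi (Suc n) \<omega>) \<partial>M) = (\<integral>\<^sup>+z. \<phi> z * emeasure M (A (Suc n) z) \<partial>count_space UNIV)"
    by (rule int_disc)
  also have "\<dots> = (\<integral>\<^sup>+z. \<integral>\<^sup>+y. \<phi> z * (emeasure M (A n y) * ennreal (jumpP G y z)) \<partial>count_space UNIV \<partial>count_space UNIV)"
    by (intro nn_integral_cong) (simp add: Asum Amarkov nn_integral_cmult)
  also have "\<dots> = (\<integral>\<^sup>+y. \<integral>\<^sup>+z. \<phi> z * (emeasure M (A n y) * ennreal (jumpP G y z)) \<partial>count_space UNIV \<partial>count_space UNIV)"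
    by (rule nn_integral_count_space_nn_integral) auto
  also have "\<dots> = (\<integral>\<^sup>+y. Pop \<phi> y * emeasure M (A n y) \<partial>count_space UNIV)"
    unfolding Pop_def
    apply (intro nn_integral_cong)
    apply (subst nn_integral_multc[symmetric], simp)
    apply (intro nn_integral_cong)
    by (simp add: ac_simps)
  also have "\<dots> = (\<integral>\<^sup>+\<omega>. Pop \<phi> (Xi n \<omega>) \<partial>M)"
    by (rule int_disc[symmetric])
  finally show ?thesis .
qed

lemma iter: "(\<integral>\<^sup>+\<omega>. \<phi> (Xi n \<omega>) \<partial>M) = (Pop ^^ n) \<phi> x"
proof (induction n arbitrary: \<phi>)
  case 0
  have "(\<integral>\<^sup>+\<omega>. \<phi> (Xi 0 \<omega>) \<partial>M) = (\<integral>\<^sup>+y. \<phi> y * indicator {x} y \<partial>count_space UNIV)"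
    unfolding int_disc A0 by (intro nn_integral_cong) (auto split: split_indicator)
  then show ?case by simp
next
  case (Suc n)
  show ?case unfolding step Suc.IH by (simp add: funpow_Suc_right del: funpow.simps)
qed

end


context cm begin

lemma indep_model: "indep_set
        {(\<lambda>\<omega> n. Xi n \<omega>) -` S \<inter> space M | S. S \<in> sets (Pi\<^sub>M UNIV (\<lambda>_. count_space UNIV))}
        {(\<lambda>\<omega> n. Ee n \<omega>) -` S \<inter> space M | S. S \<in> sets (Pi\<^sub>M UNIV (\<lambda>_. borel))}"
  using model by (simp add: ctmc_model_def)

lemma preimage_component:
  fixes N :: "'b measure" and Y :: "nat \<Rightarrow> 'w \<Rightarrow> 'b"
  assumes "B \<in> sets N" "space N = UNIV"
  shows "Y n -` B \<inter> space M \<in> {(\<lambda>\<omega> n. Y n \<omega>) -` S \<inter> space M | S. S \<in> sets (Pi\<^sub>M UNIV (\<lambda>_. N))}"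
proof -
  have sp: "space (Pi\<^sub>M UNIV (\<lambda>_. N)) = UNIV" using assms(2) by (simp add: space_PiM)
  define S where "S = (\<lambda>f. f n) -` B \<inter> space (Pi\<^sub>M UNIV (\<lambda>_. N))"
  have "S \<in> sets (Pi\<^sub>M UNIV (\<lambda>_. N))"
    unfolding S_def using measurable_sets[OF measurable_component_singleton[of n UNIV "\<lambda>_. N"] assms(1)] by simp
  moreover have "Y n -` B \<inter> space M = (\<lambda>\<omega> n. Y n \<omega>) -` S \<inter> space M"
    unfolding S_def sp by auto
  ultimately show ?thesis by blast
qed

lemma Ee_mean: "(\<integral>\<^sup>+\<omega>. ennreal (Ee n \<omega>) \<partial>M) = 1"
proof -
  have "(\<integral>\<^sup>+\<omega>. ennreal (Ee n \<omega>) \<partial>M) = (\<integral>\<^sup>+t. ennreal (exponential_density 1 t) * ennreal t \<partial>lborel)"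
    by (rule distributed_nn_integral[OF Ed, symmetric]) simp
  also have "\<dots> = (\<integral>\<^sup>+t. ennreal (erlang_density 0 1 t * t ^ 1) \<partial>lborel)"
    by (intro nn_integral_cong) (auto simp: exponential_density_def ennreal_mult'[symmetric] ennreal_neg)
  also have "\<dots> = 1" by (subst nn_integral_erlang_ith_moment) auto
  finally show ?thesis .
qed

lemma indep_AE:
  assumes "B \<in> sets borel"
  shows "prob (A n y \<inter> (Ee n -` B \<inter> space M)) = prob (A n y) * prob (Ee n -` B \<inter> space M)"
proof (rule indep_setD[OF indep_model])
  have "A n y = Xi n -` {y} \<inter> space M" by (auto simp: A_def)
  then show "A n y \<in> {(\<lambda>\<omega> n. Xi n \<omega>) -` S \<inter> space M | S. S \<in> sets (Pi\<^sub>M UNIV (\<lambda>_. count_space UNIV))}"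
    using preimage_component[of "{y}" "count_space UNIV" Xi n] by simp
  show "Ee n -` B \<inter> space M \<in> {(\<lambda>\<omega> n. Ee n \<omega>) -` S \<inter> space M | S. S \<in> sets (Pi\<^sub>M UNIV (\<lambda>_. borel))}"
    using preimage_component[of B borel Ee n] assms by simp
qed

lemma Ee_on_A: "(\<integral>\<^sup>+\<omega>. ennreal (Ee n \<omega>) * indicator (A n y) \<omega> \<partial>M) = emeasure M (A n y)"
proof -
  let ?K = "density M (indicator (A n y))"
  let ?D2 = "distr M borel (Ee n)"
  let ?c = "emeasure M (A n y)"
  have eq: "distr ?K borel (Ee n) = density ?D2 (\<lambda>_. ?c)"
  proof (rule measure_eqI)
    fix B assume B: "B \<in> sets (distr ?K borel (Ee n))"
    then have Bb[measurable]: "B \<in> sets borel" by simp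
    have "emeasure (distr ?K borel (Ee n)) B = emeasure ?K (Ee n -` B \<inter> space M)"
      by (subst emeasure_distr) auto
    also have "\<dots> = emeasure M (Ee n -` B \<inter> space M \<inter> A n y)"
      apply (subst emeasure_density)
        apply simp
       apply simp
      apply (subst nn_integral_indicator[symmetric])
       apply simp
      by (intro nn_integral_cong) (auto split: split_indicator)
    also have "\<dots> = ?c * emeasure ?D2 B"
      using indep_AE[OF Bb, of n y]
      by (subst emeasure_distr) (auto simp: emeasure_eq_measure ennreal_mult'' Int_commute)
    also have "\<dots> = emeasure (density ?D2 (\<lambda>_. ?c)) B"
      by (subst emeasure_density_const) auto
    finally show "emeasure (distr ?K borel (Ee n)) B = emeasure (density ?D2 (\<lambda>_. ?c)) B" .
  qed simp
  have "(\<integral>\<^sup>+\<omega>. ennreal (Ee n \<omega>) * indicator (A n y) \<omega> \<partial>M) = (\<integral>\<^sup>+\<omega>. ennreal (Ee n \<omega>) \<partial>?K)"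
    by (subst nn_integral_density) (auto simp: ac_simps)
  also have "\<dots> = (\<integral>\<^sup>+t. ennreal t \<partial>distr ?K borel (Ee n))"
    by (rule nn_integral_distr[symmetric]) auto
  also have "\<dots> = (\<integral>\<^sup>+t. ?c * ennreal t \<partial>?D2)"
    unfolding eq by (subst nn_integral_density) auto
  also have "\<dots> = ?c * (\<integral>\<^sup>+\<omega>. ennreal (Ee n \<omega>) \<partial>M)"
    by (subst nn_integral_cmult) (auto simp: nn_integral_distr)
  finally show ?thesis by (simp add: Ee_mean)
qed

lemma holding: "(\<integral>\<^sup>+\<omega>. ennreal (Ee n \<omega> / gam G (Xi n \<omega>)) \<partial>M) = (\<integral>\<^sup>+\<omega>. hf (Xi n \<omega>) \<partial>M)"
proof -
  have "(\<integral>\<^sup>+\<omega>. ennreal (Ee n \<omega> / gam G (Xi n \<omega>)) \<partial>M)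
      = (\<integral>\<^sup>+\<omega>. \<integral>\<^sup>+y. hf y * (ennreal (Ee n \<omega>) * indicator (A n y) \<omega>) \<partial>count_space UNIV \<partial>M)"
  proof (intro nn_integral_cong)
    fix \<omega> assume "\<omega> \<in> space M"
    then have "\<And>y. indicator (A n y) \<omega> = (indicator {Xi n \<omega>} y :: ennreal)"
      by (auto simp: A_def split: split_indicator)
    moreover have "ennreal (Ee n \<omega> / gam G (Xi n \<omega>)) = hf (Xi n \<omega>) * ennreal (Ee n \<omega>)"
      using gam_pos[of "Xi n \<omega>"]
      by (cases "0 \<le> Ee n \<omega>") (auto simp: hf_def ennreal_mult'[symmetric] ennreal_neg divide_nonpos_pos)
    ultimately show "ennreal (Ee n \<omega> / gam G (Xi n \<omega>)) = (\<integral>\<^sup>+y. hf y * (ennreal (Ee n \<omega>) * indicator (A n y) \<omega>) \<partial>count_space UNIV)"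
      by (simp add: mult.assoc[symmetric])
  qed
  also have "\<dots> = (\<integral>\<^sup>+y. \<integral>\<^sup>+\<omega>. hf y * (ennreal (Ee n \<omega>) * indicator (A n y) \<omega>) \<partial>M \<partial>count_space UNIV)"
    by (rule nn_integral_count_space_nn_integral) auto
  also have "\<dots> = (\<integral>\<^sup>+y. hf y * emeasure M (A n y) \<partial>count_space UNIV)"
    by (intro nn_integral_cong) (simp add: nn_integral_cmult Ee_on_A)
  also have "\<dots> = (\<integral>\<^sup>+\<omega>. hf (Xi n \<omega>) \<partial>M)"
    by (rule int_disc[symmetric])
  finally show ?thesis .
qed

lemma model_integral: "(\<integral>\<^sup>+\<omega>. explosion_time G Xi Ee \<omega> \<partial>M) = gf x"
proof -
  have "(\<integral>\<^sup>+\<omega>. explosion_time G Xi Ee \<omega> \<partial>M) = (\<Sum>n. \<integral>\<^sup>+\<omega>. ennreal (Ee n \<omega> / gam G (Xi n \<omega>)) \<partial>M)"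
    unfolding explosion_time_def by (rule nn_integral_suminf) measurable
  also have "\<dots> = (\<Sum>n. (Pop ^^ n) hf x)"
    by (simp add: holding iter)
  finally show ?thesis by (simp add: gf_def)
qed

end



primrec Xc :: "'a \<Rightarrow> nat \<Rightarrow> ((nat \<times> 'a) \<Rightarrow> 'a) \<Rightarrow> 'a" where
  "Xc x0 0 \<omega> = x0"
| "Xc x0 (Suc n) \<omega> = \<omega> (n, Xc x0 n \<omega>)"

definition Exd :: "real measure" where
  "Exd = density lborel (\<lambda>t. ennreal (exponential_density 1 t))"

lemma sets_Exd[simp, measurable_cong]: "sets Exd = sets borel"
  by (simp add: Exd_def)

lemma space_Exd[simp]: "space Exd = UNIV"
  by (simp add: Exd_def)

lemma prob_Exd: "prob_space Exd"
  unfolding Exd_def by (rule prob_space_exponential_density) simp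

definition N2 :: "(nat \<Rightarrow> real) measure" where "N2 = PiM UNIV (\<lambda>_. Exd)"

lemma prob_N2: "prob_space N2"
  unfolding N2_def by (rule prob_space_PiM) (rule prob_Exd)

lemma space_N2[simp]: "space N2 = UNIV"
  by (simp add: N2_def space_PiM)

context rm begin

definition Qp :: "'a \<Rightarrow> 'a pmf" where "Qp y = embed_pmf (jumpP G y)"

lemma pmf_Qp: "pmf (Qp y) z = jumpP G y z"
  unfolding Qp_def by (rule pmf_embed_pmf) (auto simp: P_nonneg P_rowsum)

definition N1 :: "((nat \<times> 'a) \<Rightarrow> 'a) measure" where
  "N1 = PiM UNIV (\<lambda>p. measure_pmf (Qp (snd p)))"

lemma prob_N1: "prob_space N1"
  unfolding N1_def by (rule prob_space_PiM) (rule prob_space_measure_pmf)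

lemma space_N1[simp]: "space N1 = UNIV"
  by (simp add: N1_def space_PiM)

lemma comp_meas: "(\<lambda>\<omega>. \<omega> p) \<in> measurable N1 (count_space UNIV)"
proof -
  have "(\<lambda>\<omega>. \<omega> p) \<in> measurable N1 (measure_pmf (Qp (snd p)))"
    unfolding N1_def by (rule measurable_component_singleton) simp
  moreover have "measurable N1 (measure_pmf (Qp (snd p))) = measurable N1 (count_space UNIV)"
    by (rule measurable_cong_sets) auto
  ultimately show ?thesis by simp
qed

lemma Xc_meas[measurable]: "Xc x0 n \<in> measurable N1 (count_space UNIV)"
proof (induction n)
  case 0 then show ?case by simp
next
  case (Suc n)
  have "(\<lambda>\<omega>. (\<lambda>i \<omega>. \<omega> (n, i)) (Xc x0 n \<omega>) \<omega>) \<in> measurable N1 (count_space UNIV)"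
    by (rule measurable_compose_countable[OF comp_meas Suc.IH])
  then show ?case by simp
qed

definition NN where "NN = N1 \<Otimes>\<^sub>M N2"

lemma prob_NN: "prob_space NN"
  unfolding NN_def by (rule prob_space_pair[OF prob_N1 prob_N2])

lemma space_NN[simp]: "space NN = UNIV"
  by (simp add: NN_def space_pair_measure)

definition Tm :: "'a \<Rightarrow> ((nat \<times> 'a) \<Rightarrow> 'a) \<times> (nat \<Rightarrow> real) \<Rightarrow> nat \<Rightarrow> 'a \<times> real" where
  "Tm x0 \<omega> = (\<lambda>n. (Xc x0 n (fst \<omega>), snd \<omega> n))"

abbreviation "Tgt \<equiv> (PiM UNIV (\<lambda>_. count_space UNIV \<Otimes>\<^sub>M lborel) :: (nat \<Rightarrow> 'a \<times> real) measure)"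

lemma snd_comp_meas: "(\<lambda>\<omega>. snd \<omega> n) \<in> measurable NN lborel"
proof -
  have "(\<lambda>\<omega>. \<omega> n) \<in> measurable N2 Exd"
    unfolding N2_def by (rule measurable_component_singleton) simp
  then have "(\<lambda>\<omega>. \<omega> n) \<in> measurable N2 lborel"
    using measurable_cong_sets[of N2 N2 Exd lborel] by simp
  then show ?thesis unfolding NN_def by (rule measurable_compose[OF measurable_snd])
qed

lemma Tm_meas: "Tm x0 \<in> measurable NN Tgt"
  unfolding Tm_def
proof (rule measurable_PiM_single')
  fix n :: nat
  have "(\<lambda>\<omega>. Xc x0 n (fst \<omega>)) \<in> measurable NN (count_space UNIV)"
    unfolding NN_def by (rule measurable_compose[OF measurable_fst Xc_meas])
  then show "(\<lambda>\<omega>. (Xc x0 n (fst \<omega>), snd \<omega> n)) \<in> measurable NN (count_space UNIV \<Otimes>\<^sub>M lborel)"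
    using snd_comp_meas by (rule measurable_Pair)
qed (auto simp: space_pair_measure)

definition Mf :: "'a \<Rightarrow> (nat \<Rightarrow> 'a \<times> real) measure" where
  "Mf x0 = distr NN Tgt (Tm x0)"

end


context rm begin

lemma emeasure_NN_Times:
  assumes "A \<in> sets N1" "B \<in> sets N2"
  shows "emeasure NN (A \<times> B) = emeasure N1 A * emeasure N2 B"
proof -
  interpret N2: prob_space N2 by (rule prob_N2)
  show ?thesis unfolding NN_def by (rule N2.emeasure_pair_measure_Times[OF assms])
qed

lemma distr_NN_snd:
  assumes f: "f \<in> measurable N2 K"
  shows "distr NN K (\<lambda>\<omega>. f (snd \<omega>)) = distr N2 K f"
proof (rule measure_eqI)
  interpret N1: prob_space N1 by (rule prob_N1)
  have fm: "(\<lambda>\<omega>. f (snd \<omega>)) \<in> measurable NN K"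
    unfolding NN_def by (rule measurable_compose[OF measurable_snd f])
  fix B assume "B \<in> sets (distr NN K (\<lambda>\<omega>. f (snd \<omega>)))"
  then have B: "B \<in> sets K" by simp
  have "(\<lambda>\<omega>. f (snd \<omega>)) -` B \<inter> space NN = UNIV \<times> (f -` B \<inter> space N2)" by auto
  moreover have "f -` B \<inter> space N2 \<in> sets N2" using f B by (rule measurable_sets)
  moreover have "UNIV \<in> sets N1" using sets.top[of N1] by simp
  moreover have "emeasure N1 UNIV = 1" using N1.emeasure_space_1 by simp
  ultimately show "emeasure (distr NN K (\<lambda>\<omega>. f (snd \<omega>))) B = emeasure (distr N2 K f) B"
    using B fm f by (simp add: emeasure_distr emeasure_NN_Times)
qed simp

lemma Y_meas: "(\<lambda>\<omega>1 n. Xc x0 n \<omega>1) \<in> measurable N1 (PiM UNIV (\<lambda>_. count_space UNIV))"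
  by (rule measurable_PiM_single') (auto simp: Xc_meas)

lemma Mf_prob: "prob_space (Mf x0)"
proof -
  interpret prob_space NN by (rule prob_NN)
  show ?thesis unfolding Mf_def by (rule prob_space_distr[OF Tm_meas])
qed

lemma sets_Mf[simp, measurable_cong]: "sets (Mf x0) = sets Tgt"
  by (simp add: Mf_def)

lemma space_Mf[simp]: "space (Mf x0) = UNIV"
  by (simp add: Mf_def space_PiM space_pair_measure)

lemma Xf_meas: "(\<lambda>\<omega>. fst (\<omega> n)) \<in> measurable (Mf x0) (count_space UNIV)"
proof -
  have "(\<lambda>\<omega>. fst (\<omega> n)) \<in> measurable Tgt (count_space UNIV)"
    by (rule measurable_compose[OF measurable_component_singleton[of n UNIV "\<lambda>_. count_space UNIV \<Otimes>\<^sub>M lborel"] measurable_fst]) simp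
  then show ?thesis using measurable_cong_sets[of "Mf x0" Tgt "count_space UNIV" "count_space UNIV"] by simp
qed

lemma Ef_meas_Tgt: "(\<lambda>\<omega>. snd (\<omega> n)) \<in> measurable Tgt lborel"
  by (rule measurable_compose[OF measurable_component_singleton[of n UNIV "\<lambda>_. count_space UNIV \<Otimes>\<^sub>M lborel"] measurable_snd]) simp

lemma Ef_distr: "distr (Mf x0) lborel (\<lambda>\<omega>. snd (\<omega> n)) = Exd"
proof -
  have "distr (Mf x0) lborel (\<lambda>\<omega>. snd (\<omega> n)) = distr NN lborel ((\<lambda>\<omega>. snd (\<omega> n)) \<circ> Tm x0)"
    unfolding Mf_def by (rule distr_distr[OF Ef_meas_Tgt Tm_meas])
  also have "\<dots> = distr NN lborel (\<lambda>\<omega>. (\<lambda>\<omega>2. \<omega>2 n) (snd \<omega>))"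
    by (simp add: Tm_def o_def)
  also have "\<dots> = distr N2 lborel (\<lambda>\<omega>2. \<omega>2 n)"
  proof (rule distr_NN_snd)
    have "(\<lambda>\<omega>. \<omega> n) \<in> measurable N2 Exd"
      unfolding N2_def by (rule measurable_component_singleton) simp
    then show "(\<lambda>\<omega>. \<omega> n) \<in> measurable N2 lborel"
      using measurable_cong_sets[of N2 N2 Exd lborel] by simp
  qed
  also have "\<dots> = distr N2 Exd (\<lambda>\<omega>2. \<omega>2 n)"
    by (rule distr_cong) auto
  also have "\<dots> = Exd"
    unfolding N2_def by (rule distr_PiM_component) (auto intro: prob_Exd)
  finally show ?thesis .
qed

lemma Ef_distributed: "distributed (Mf x0) lborel (\<lambda>\<omega>. snd (\<omega> n)) (\<lambda>t. ennreal (exponential_density 1 t))"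
  unfolding distributed_def
proof (intro conjI)
  show "distr (Mf x0) lborel (\<lambda>\<omega>. snd (\<omega> n)) = density lborel (\<lambda>t. ennreal (exponential_density 1 t))"
    by (simp add: Ef_distr Exd_def)
  show "(\<lambda>\<omega>. snd (\<omega> n)) \<in> measurable (Mf x0) lborel"
    using Ef_meas_Tgt measurable_cong_sets[of "Mf x0" Tgt lborel lborel] by simp
qed simp

end



lemma Xc_path_iff:
  assumes "xs 0 = x0"
  shows "(\<forall>i\<le>n. Xc x0 i \<omega> = xs i) \<longleftrightarrow> (\<forall>i<n. \<omega> (i, xs i) = xs (Suc i))"
proof (induction n)
  case 0 then show ?case using assms by simp
next
  case (Suc n)
  have "(\<forall>i\<le>Suc n. Xc x0 i \<omega> = xs i) \<longleftrightarrow> (\<forall>i\<le>n. Xc x0 i \<omega> = xs i) \<and> Xc x0 (Suc n) \<omega> = xs (Suc n)"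
    by (auto simp: le_Suc_eq)
  also have "\<dots> \<longleftrightarrow> (\<forall>i<n. \<omega> (i, xs i) = xs (Suc i)) \<and> \<omega> (n, xs n) = xs (Suc n)"
    using Suc.IH by auto
  also have "\<dots> \<longleftrightarrow> (\<forall>i<Suc n. \<omega> (i, xs i) = xs (Suc i))"
    by (auto simp: less_Suc_eq)
  finally show ?case .
qed

context rm begin

lemma measure_NN_Times:
  assumes "A \<in> sets N1" "B \<in> sets N2"
  shows "measure NN (A \<times> B) = measure N1 A * measure N2 B"
  unfolding measure_def emeasure_NN_Times[OF assms] by (simp add: enn2real_mult)

lemma N1_path:
  "measure N1 {\<omega>1. \<forall>i\<le>n. Xc x0 i \<omega>1 = xs i}
     = (if xs 0 = x0 then 1 else 0) * (\<Prod>i<n. jumpP G (xs i) (xs (Suc i)))"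
proof (cases "xs 0 = x0")
  case False
  then have e: "{\<omega>1. \<forall>i\<le>n. Xc x0 i \<omega>1 = xs i} = {}" by (auto dest: spec[of _ 0])
  show ?thesis unfolding e using False by simp
next
  case True
  let ?Mc = "\<lambda>p::nat \<times> 'a. measure_pmf (Qp (snd p))"
  define J where "J = (\<lambda>i. (i, xs i)) ` {..<n}"
  have inj: "inj_on (\<lambda>i. (i, xs i)) {..<n}" by (auto simp: inj_on_def)
  have eq: "{\<omega>1. \<forall>i\<le>n. Xc x0 i \<omega>1 = xs i} = prod_emb UNIV ?Mc J (Pi\<^sub>E J (\<lambda>j. {xs (Suc (fst j))}))"
    unfolding Xc_path_iff[of xs x0, OF True] J_def
    by (auto simp: prod_emb_iff restrict_PiE_iff Pi_iff)
  have "emeasure N1 (prod_emb UNIV ?Mc J (Pi\<^sub>E J (\<lambda>j. {xs (Suc (fst j))})))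
      = (\<Prod>j\<in>J. emeasure (?Mc j) {xs (Suc (fst j))})"
    unfolding N1_def by (rule emeasure_PiM_emb) (auto simp: J_def prob_space_measure_pmf)
  also have "\<dots> = (\<Prod>i<n. ennreal (jumpP G (xs i) (xs (Suc i))))"
    unfolding J_def by (simp add: prod.reindex[OF inj] emeasure_pmf_single pmf_Qp)
  also have "\<dots> = ennreal (\<Prod>i<n. jumpP G (xs i) (xs (Suc i)))"
    by (rule prod_ennreal) (simp add: P_nonneg)
  finally show ?thesis using True unfolding eq measure_def
    by (simp add: prod_nonneg P_nonneg)
qed

lemma Mf_path:
  "measure (Mf x0) {\<omega> \<in> space (Mf x0). \<forall>i\<le>n. fst (\<omega> i) = xs i}
     = (if xs 0 = x0 then 1 else 0) * (\<Prod>i<n. jumpP G (xs i) (xs (Suc i)))"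
proof -
  let ?S = "{\<omega> \<in> space (Mf x0). \<forall>i\<le>n. fst (\<omega> i) = xs i}"
  have "?S = (\<Inter>i\<in>{..n}. (\<lambda>\<omega>. fst (\<omega> i)) -` {xs i} \<inter> space Tgt)"
    by (auto simp: space_PiM space_pair_measure)
  moreover have "(\<lambda>\<omega>. fst (\<omega> i)) -` {xs i} \<inter> space Tgt \<in> sets Tgt" for i
    by (rule measurable_sets[OF measurable_compose[OF measurable_component_singleton[of i UNIV "\<lambda>_. count_space UNIV \<Otimes>\<^sub>M lborel"] measurable_fst]]) auto
  ultimately have S: "?S \<in> sets Tgt" by auto
  have pre: "Tm x0 -` ?S \<inter> space NN = {\<omega>1. \<forall>i\<le>n. Xc x0 i \<omega>1 = xs i} \<times> UNIV"
    by (auto simp: Tm_def)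
  have "{\<omega>1. \<forall>i\<le>n. Xc x0 i \<omega>1 = xs i} = (\<Inter>i\<in>{..n}. Xc x0 i -` {xs i} \<inter> space N1)"
    by auto
  moreover have "Xc x0 i -` {xs i} \<inter> space N1 \<in> sets N1" for i
    by (rule measurable_sets[OF Xc_meas]) auto
  ultimately have S1: "{\<omega>1. \<forall>i\<le>n. Xc x0 i \<omega>1 = xs i} \<in> sets N1" by auto
  interpret N2: prob_space N2 by (rule prob_N2)
  have U2: "UNIV \<in> sets N2" using sets.top[of N2] by simp
  have "measure (Mf x0) ?S = measure NN (Tm x0 -` ?S \<inter> space NN)"
    using measure_distr[OF Tm_meas S] unfolding Mf_def[symmetric] .
  also have "\<dots> = measure N1 {\<omega>1. \<forall>i\<le>n. Xc x0 i \<omega>1 = xs i}"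
    unfolding pre measure_NN_Times[OF S1 U2] using N2.prob_space by simp
  finally show ?thesis by (simp add: N1_path)
qed

end


context rm begin

lemma Eproc_meas: "(\<lambda>\<omega> n. snd (\<omega> n)) \<in> measurable Tgt (PiM UNIV (\<lambda>_. borel :: real measure))"
proof (rule measurable_PiM_single')
  fix n :: nat
  show "(\<lambda>\<omega>. snd (\<omega> n)) \<in> measurable Tgt borel"
    using Ef_meas_Tgt[of n] measurable_cong_sets[of Tgt Tgt lborel borel] by simp
qed auto

lemma Xproc_meas: "(\<lambda>\<omega> n. fst (\<omega> n)) \<in> measurable Tgt (PiM UNIV (\<lambda>_. count_space UNIV))"
proof (rule measurable_PiM_single')
  fix n :: nat
  show "(\<lambda>\<omega>. fst (\<omega> n)) \<in> measurable Tgt (count_space UNIV)"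
    by (rule measurable_compose[OF measurable_component_singleton[of n UNIV "\<lambda>_. count_space UNIV \<Otimes>\<^sub>M lborel"] measurable_fst]) simp
qed auto

lemma sets_N2_borel: "sets N2 = sets (PiM UNIV (\<lambda>_. borel :: real measure))"
  unfolding N2_def by (rule sets_PiM_cong) auto

lemma Mf_indep_vars: "prob_space.indep_vars (Mf x0) (\<lambda>_. borel) (\<lambda>n \<omega>. snd (\<omega> n)) UNIV"
proof -
  interpret prob_space "Mf x0" by (rule Mf_prob)
  have rv: "random_variable borel (\<lambda>\<omega>. snd (\<omega> i))" for i
    using Ef_meas_Tgt[of i] measurable_cong_sets[of "Mf x0" Tgt lborel borel] by simp
  have D: "distr (Mf x0) borel (\<lambda>\<omega>. snd (\<omega> i)) = Exd" for i
  proof -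
    have "distr (Mf x0) borel (\<lambda>\<omega>. snd (\<omega> i)) = distr (Mf x0) lborel (\<lambda>\<omega>. snd (\<omega> i))"
      by (rule distr_cong) auto
    then show ?thesis by (simp add: Ef_distr)
  qed
  have "distr (Mf x0) (PiM UNIV (\<lambda>_. borel)) (\<lambda>\<omega>. \<lambda>i\<in>UNIV. snd (\<omega> i))
      = distr (Mf x0) (PiM UNIV (\<lambda>_. borel)) (\<lambda>\<omega> i. snd (\<omega> i))"
    by (simp add: restrict_UNIV)
  also have "\<dots> = distr NN (PiM UNIV (\<lambda>_. borel)) ((\<lambda>\<omega> i. snd (\<omega> i)) \<circ> Tm x0)"
    unfolding Mf_def by (rule distr_distr[OF Eproc_meas Tm_meas])
  also have "\<dots> = distr NN (PiM UNIV (\<lambda>_. borel)) (\<lambda>\<omega>. (\<lambda>x. x) (snd \<omega>))"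
    by (simp add: Tm_def o_def)
  also have "\<dots> = distr N2 (PiM UNIV (\<lambda>_. borel)) (\<lambda>x. x)"
    by (rule distr_NN_snd) (simp add: measurable_ident_sets sets_N2_borel)
  also have "\<dots> = N2" by (rule distr_id2) (simp add: sets_N2_borel)
  also have "\<dots> = PiM UNIV (\<lambda>i. distr (Mf x0) borel (\<lambda>\<omega>. snd (\<omega> i)))"
    unfolding N2_def D ..
  finally show ?thesis
    by (subst indep_vars_iff_distr_eq_PiM[OF _ rv]) auto
qed

lemma Mf_indep_set: "prob_space.indep_set (Mf x0)
        {(\<lambda>\<omega> n. fst (\<omega> n)) -` S \<inter> space (Mf x0) | S. S \<in> sets (Pi\<^sub>M UNIV (\<lambda>_. count_space UNIV))}
        {(\<lambda>\<omega> n. snd (\<omega> n)) -` S \<inter> space (Mf x0) | S. S \<in> sets (Pi\<^sub>M UNIV (\<lambda>_. borel))}"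
proof -
  interpret prob_space "Mf x0" by (rule Mf_prob)
  interpret N2: prob_space N2 by (rule prob_N2)
  interpret N1: prob_space N1 by (rule prob_N1)
  let ?Y = "\<lambda>\<omega>1 n. Xc x0 n \<omega>1"
  have U1: "UNIV \<in> sets N1" using sets.top[of N1] by simp
  have U2: "UNIV \<in> sets N2" using sets.top[of N2] by simp
  have m1: "measure N1 UNIV = 1" using N1.prob_space by simp
  have m2: "measure N2 UNIV = 1" using N2.prob_space by simp
  have pm: "prob A = measure NN (Tm x0 -` A \<inter> space NN)" if "A \<in> sets Tgt" for A
    using measure_distr[OF Tm_meas that] unfolding Mf_def[symmetric] .
  show ?thesis
  proof (rule indep_setI)
    show "{(\<lambda>\<omega> n. fst (\<omega> n)) -` S \<inter> space (Mf x0) | S. S \<in> sets (Pi\<^sub>M UNIV (\<lambda>_. count_space UNIV))} \<subseteq> events"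
      using measurable_sets[OF Xproc_meas] by (auto simp: space_PiM space_pair_measure)
    show "{(\<lambda>\<omega> n. snd (\<omega> n)) -` S \<inter> space (Mf x0) | S. S \<in> sets (Pi\<^sub>M UNIV (\<lambda>_. borel))} \<subseteq> events"
      using measurable_sets[OF Eproc_meas] by (auto simp: space_PiM space_pair_measure)
  next
    fix a b
    assume "a \<in> {(\<lambda>\<omega> n. fst (\<omega> n)) -` S \<inter> space (Mf x0) | S. S \<in> sets (Pi\<^sub>M UNIV (\<lambda>_. count_space UNIV))}"
      and "b \<in> {(\<lambda>\<omega> n. snd (\<omega> n)) -` S \<inter> space (Mf x0) | S. S \<in> sets (Pi\<^sub>M UNIV (\<lambda>_. borel))}"
    then obtain S S' where S: "S \<in> sets (Pi\<^sub>M UNIV (\<lambda>_. count_space UNIV))" "a = (\<lambda>\<omega> n. fst (\<omega> n)) -` S \<inter> space (Mf x0)"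
      and S': "S' \<in> sets (Pi\<^sub>M UNIV (\<lambda>_. borel))" "b = (\<lambda>\<omega> n. snd (\<omega> n)) -` S' \<inter> space (Mf x0)"
      by blast
    have a: "a \<in> sets Tgt" using measurable_sets[OF Xproc_meas S(1)] S(2) by (simp add: space_PiM space_pair_measure)
    have b: "b \<in> sets Tgt" using measurable_sets[OF Eproc_meas S'(1)] S'(2) by (simp add: space_PiM space_pair_measure)
    have SY: "?Y -` S \<in> sets N1" using measurable_sets[OF Y_meas S(1)] by simp
    have S'2: "S' \<in> sets N2" using S'(1) sets_N2_borel by simp
    have snd_eta: "(\<lambda>n. snd \<omega> n) = snd \<omega>" for \<omega> :: "((nat \<times> 'a) \<Rightarrow> 'a) \<times> (nat \<Rightarrow> real)" by simp
    have pa: "Tm x0 -` a \<inter> space NN = (?Y -` S) \<times> UNIV"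
      using S(2) by (auto simp: Tm_def)
    have pb: "Tm x0 -` b \<inter> space NN = UNIV \<times> S'"
      using S'(2) by (auto simp: Tm_def)
    have pab: "Tm x0 -` (a \<inter> b) \<inter> space NN = (?Y -` S) \<times> S'"
      using S(2) S'(2) by (auto simp: Tm_def)
    have "prob (a \<inter> b) = measure N1 (?Y -` S) * measure N2 S'"
      using pm[OF sets.Int[OF a b]] pab measure_NN_Times[OF SY S'2] by simp
    moreover have "prob a = measure N1 (?Y -` S)"
      using pm[OF a] pa measure_NN_Times[OF SY U2] m2 by simp
    moreover have "prob b = measure N2 S'"
      using pm[OF b] pb measure_NN_Times[OF U1 S'2] m1 by simp
    ultimately show "prob (a \<inter> b) = prob a * prob b" by simp
  qed
qed

lemma model_exists: "ctmc_model G x0 (Mf x0) (\<lambda>n \<omega>. fst (\<omega> n)) (\<lambda>n \<omega>. snd (\<omega> n))"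
  unfolding ctmc_model_def
  using Mf_prob Xf_meas Mf_path Ef_distributed Mf_indep_vars Mf_indep_set by blast

end

theorem theorem1p3:
  fixes \<Gamma> :: "'a :: countable \<Rightarrow> 'a \<Rightarrow> real"
  assumes "infinite (UNIV :: 'a set)"
    and "rate_matrix \<Gamma>"
    and "irreducible_jump \<Gamma>"
  shows "(\<exists>f \<in> Dom_plus \<Gamma>. \<exists>\<epsilon>::real. (\<forall>x. 0 < f x) \<and> 0 < \<epsilon> \<and>
            (\<forall>x. gen_apply \<Gamma> f x \<le> - \<epsilon>))
     \<longleftrightarrow>
     (\<forall>x. \<forall>(M :: (nat \<Rightarrow> 'a \<times> real) measure) Xi Ee. ctmc_model \<Gamma> x M Xi Ee \<longrightarrow>
            (\<integral>\<^sup>+ \<omega>. explosion_time \<Gamma> Xi Ee \<omega> \<partial>M) < \<infinity>)"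
proof -
  interpret rm \<Gamma> by unfold_locales (rule assms(2))
  show ?thesis
  proof
    assume "\<exists>f \<in> Dom_plus \<Gamma>. \<exists>\<epsilon>::real. (\<forall>x. 0 < f x) \<and> 0 < \<epsilon> \<and> (\<forall>x. gen_apply \<Gamma> f x \<le> - \<epsilon>)"
    then obtain f e where f: "f \<in> Dom_plus \<Gamma>" "\<forall>x. 0 < f x" "0 < e" "\<forall>x. gen_apply \<Gamma> f x \<le> - e"
      by blast
    show "\<forall>x. \<forall>(M :: (nat \<Rightarrow> 'a \<times> real) measure) Xi Ee. ctmc_model \<Gamma> x M Xi Ee \<longrightarrow>
            (\<integral>\<^sup>+ \<omega>. explosion_time \<Gamma> Xi Ee \<omega> \<partial>M) < \<infinity>"
    proof (intro allI impI)
      fix x and M :: "(nat \<Rightarrow> 'a \<times> real) measure" and Xi Ee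
      assume "ctmc_model \<Gamma> x M Xi Ee"
      then interpret cm \<Gamma> x M Xi Ee by unfold_locales
      show "(\<integral>\<^sup>+ \<omega>. explosion_time \<Gamma> Xi Ee \<omega> \<partial>M) < \<infinity>"
        unfolding model_integral using cond1_imp[OF f] .
    qed
  next
    assume H: "\<forall>x. \<forall>(M :: (nat \<Rightarrow> 'a \<times> real) measure) Xi Ee. ctmc_model \<Gamma> x M Xi Ee \<longrightarrow>
            (\<integral>\<^sup>+ \<omega>. explosion_time \<Gamma> Xi Ee \<omega> \<partial>M) < \<infinity>"
    have "gf x < \<infinity>" for x
    proof -
      interpret cm \<Gamma> x "Mf x" "\<lambda>n \<omega>. fst (\<omega> n)" "\<lambda>n \<omega>. snd (\<omega> n)"
        by unfold_locales (rule model_exists)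
      show ?thesis using H[rule_format, OF model_exists[of x]] model_integral by simp
    qed
    then show "\<exists>f \<in> Dom_plus \<Gamma>. \<exists>\<epsilon>::real. (\<forall>x. 0 < f x) \<and> 0 < \<epsilon> \<and> (\<forall>x. gen_apply \<Gamma> f x \<le> - \<epsilon>)"
      by (rule cond2_imp)
  qed
qed



end
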